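(* Let $E_1^S,\dots,E_{d_S}^S\ge 0$ be real numbers, $E\in\mathbb{R}$, and let $s:\mathbb{R}\to\mathbb{R}$ be twice differentiable. Set $\beta=s'(E)$ and define probability vectors $$p_k=\frac{e^{s(E-E_k^S)}}{\sum_{l=1}^{d_S}e^{s(E-E_l^S)}},\qquad q_k=\frac{e^{-\beta E_k^S}}{\sum_{l=1}^{d_S}e^{-\beta E_l^S}} .$$ Let $$\gamma_{\max}=\max_k\sup_{\xi\in[E-E_k^S,E]}\tfrac12 s''(\xi)(E_k^S)^2,\qquad \gamma_{\min}=\min_k\inf_{\xi\in[E-E_k^S,E]}\tfrac12 s''(\xi)(E_k^S)^2,$$ assumed finite. Then for every $k$, $|p_k-q_k|\le q_k\left(e^{\gamma_{\max}-\gamma_{\min}}-1\right)$, and consequently $$\tfrac12\sum_{k=1}^{d_S}|p_k-q_k|\le \tfrac12\left(e^{\gamma_{\max}-\gamma_{\min}}-1\right).$$ In particular, if there are $\eta>0$ and an integer $m\ge1$ such that $-\frac{4}{\eta^2m}\le s''(\xi)\le 0$ for all $\xi\in[E-\max_kE_k^S,E]$, and $\max_k E_k^S\le h$, then $\tfrac12\sum_k|p_k-q_k|\le \tfrac12\left(e^{2h^2/(\eta^2 m)}-1\right)$.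
   Context: Here $e^{s}$ plays the role of a smooth approximation of the number of bath energy levels in an energy window, the $E_k^S$ are the eigenvalues of a system Hamiltonian $H_S$ (so $h$ can be taken to be $\|H_S\|_\infty$ when $H_S\ge0$), $(p_k)$ are the eigenvalues of the reduced microcanonical state of the uncoupled system-plus-bath, and $(q_k)$ are the eigenvalues of the Gibbs state $e^{-\beta H_S}/\operatorname{Tr}e^{-\beta H_S}$. *)

theory Defs
  imports "HOL-Analysis.Analysis"
begin

text \<open>System energies are indexed by k < d (d = d_S). p is the reduced microcanonical
spectrum, q the Gibbs spectrum at inverse temperature beta.\<close>

definition pvec :: "(real \<Rightarrow> real) \<Rightarrow> real \<Rightarrow> (nat \<Rightarrow> real) \<Rightarrow> nat \<Rightarrow> nat \<Rightarrow> real" where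
  "pvec s E ES d k = exp (s (E - ES k)) / (\<Sum>l<d. exp (s (E - ES l)))"

definition qvec :: "real \<Rightarrow> (nat \<Rightarrow> real) \<Rightarrow> nat \<Rightarrow> nat \<Rightarrow> real" where
  "qvec \<beta> ES d k = exp (- \<beta> * ES k) / (\<Sum>l<d. exp (- \<beta> * ES l))"

definition gamma_max :: "(real \<Rightarrow> real) \<Rightarrow> real \<Rightarrow> (nat \<Rightarrow> real) \<Rightarrow> nat \<Rightarrow> real" where
  "gamma_max s2 E ES d =
     Max ((\<lambda>k. SUP \<xi>\<in>{E - ES k..E}. s2 \<xi> * (ES k)\<^sup>2 / 2) ` {..<d})"

definition gamma_min :: "(real \<Rightarrow> real) \<Rightarrow> real \<Rightarrow> (nat \<Rightarrow> real) \<Rightarrow> nat \<Rightarrow> real" where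
  "gamma_min s2 E ES d =
     Min ((\<lambda>k. INF \<xi>\<in>{E - ES k..E}. s2 \<xi> * (ES k)\<^sup>2 / 2) ` {..<d})"

end

theory Submission imports Defs begin

lemma part1:
  fixes d :: nat and ES :: "nat \<Rightarrow> real" and E :: real
    and s s1 s2 :: "real \<Rightarrow> real" and g :: "nat \<Rightarrow> real"
  assumes d_pos: "d \<ge> 1"
    and tay: "\<And>k. k < d \<Longrightarrow> s (E - ES k) = s E - s1 E * ES k + g k"
    and lo: "\<And>k. k < d \<Longrightarrow> gmin \<le> g k"
    and hi: "\<And>k. k < d \<Longrightarrow> g k \<le> gmax"
  shows "(\<forall>k<d. \<bar>pvec s E ES d k - qvec (s1 E) ES d k\<bar>
               \<le> qvec (s1 E) ES d k * (exp (gmax - gmin) - 1)) \<and>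
       (\<Sum>k<d. \<bar>pvec s E ES d k - qvec (s1 E) ES d k\<bar>) / 2
         \<le> (exp (gmax - gmin) - 1) / 2"
proof -
  define w where "w k = exp (- s1 E * ES k)" for k
  define W where "W = (\<Sum>k<d. w k)"
  define Z where "Z = (\<Sum>k<d. w k * exp (g k))"
  have wpos: "w k > 0" for k by (simp add: w_def)
  have Wpos: "W > 0" unfolding W_def using d_pos wpos
    by (intro sum_pos) (auto simp: lessThan_empty_iff)
  have ex: "exp (s (E - ES k)) = exp (s E) * (w k * exp (g k))" if "k < d" for k
    proof -
      have "exp (s (E - ES k)) = exp (s E + (- s1 E * ES k) + g k)" using tay[OF that] by simp
      thus ?thesis by (simp only: w_def exp_add mult.assoc)
    qed
  have sumex: "(\<Sum>l<d. exp (s (E - ES l))) = exp (s E) * Z"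
    unfolding Z_def sum_distrib_left by (rule sum.cong) (auto simp: ex)
  have p: "pvec s E ES d k = w k * exp (g k) / Z" if "k < d" for k
    unfolding pvec_def sumex ex[OF that] by simp
  have q: "qvec (s1 E) ES d k = w k / W" for k
    unfolding qvec_def W_def w_def by simp
  have Zlo: "W * exp gmin \<le> Z" unfolding W_def Z_def sum_distrib_right
    by (rule sum_mono) (use lo wpos in auto)
  have Zhi: "Z \<le> W * exp gmax" unfolding W_def Z_def sum_distrib_right
    by (rule sum_mono) (use hi wpos in auto)
  have Zpos: "Z > 0" using Zlo Wpos by (smt (verit) exp_gt_zero mult_pos_pos)
  define D where "D = gmax - gmin"
  have D0: "D \<ge> 0" using lo[of 0] hi[of 0] d_pos unfolding D_def by simp
  have key: "\<bar>pvec s E ES d k - qvec (s1 E) ES d k\<bar> \<le> qvec (s1 E) ES d k * (exp D - 1)"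
    if k: "k < d" for k
  proof -
    define r where "r = W * exp (g k) / Z"
    have dif: "pvec s E ES d k - qvec (s1 E) ES d k = (w k / W) * (r - 1)"
      using Wpos Zpos unfolding p[OF k] q r_def by (simp add: field_simps)
    have "r \<le> W * exp gmax / (W * exp gmin)"
      unfolding r_def using Wpos Zpos Zlo hi[OF k]
      by (intro frac_le) auto
    also have "\<dots> = exp D" using Wpos by (simp add: D_def exp_diff)
    finally have r1: "r \<le> exp D" .
    have "exp (- D) = W * exp gmin / (W * exp gmax)" using Wpos by (simp add: D_def exp_diff exp_minus field_simps)
    also have "\<dots> \<le> r"
      unfolding r_def using Wpos Zpos Zhi lo[OF k]
      by (intro frac_le) auto
    finally have r2: "exp (- D) \<le> r" .
    have "exp D + exp (- D) \<ge> 2"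
    proof -
      have "(exp D - 1)^2 \<ge> 0" by simp
      hence "exp D * exp D + 1 \<ge> 2 * exp D" by (simp add: power2_eq_square algebra_simps)
      thus ?thesis by (simp add: exp_minus field_simps)
    qed
    hence "\<bar>r - 1\<bar> \<le> exp D - 1" using r1 r2 by linarith
    hence "(w k / W) * \<bar>r - 1\<bar> \<le> (w k / W) * (exp D - 1)"
      using wpos[of k] Wpos by (intro mult_left_mono) auto
    moreover have "\<bar>pvec s E ES d k - qvec (s1 E) ES d k\<bar> = (w k / W) * \<bar>r - 1\<bar>"
      using wpos[of k] Wpos by (simp only: dif abs_mult) simp
    ultimately show ?thesis by (simp add: q)
  qed
  have "(\<Sum>k<d. \<bar>pvec s E ES d k - qvec (s1 E) ES d k\<bar>) \<le> (\<Sum>k<d. qvec (s1 E) ES d k * (exp D - 1))"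
    by (rule sum_mono) (use key in auto)
  also have "\<dots> = (\<Sum>k<d. w k) / W * (exp D - 1)"
    unfolding q sum_distrib_right[symmetric] sum_divide_distrib[symmetric] by simp
  also have "\<dots> = exp D - 1" using Wpos unfolding W_def by simp
  finally show ?thesis using key unfolding D_def by auto
qed

lemma taylor2:
  fixes s s1 s2 :: "real \<Rightarrow> real"
  assumes s_deriv: "\<And>x. (s has_real_derivative s1 x) (at x)"
    and s1_deriv: "\<And>x. (s1 has_real_derivative s2 x) (at x)"
    and x: "x \<ge> 0"
  shows "\<exists>\<xi>\<in>{E-x..E}. s (E - x) = s E - s1 E * x + s2 \<xi> * x\<^sup>2 / 2"
proof (cases "x = 0")
  case True thus ?thesis by auto
next
  case False
  define diff where "diff = (\<lambda>m::nat. if m = 0 then s else if m = 1 then s1 else s2)"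
  have "\<exists>t. E - x < t \<and> t < E \<and>
    s (E - x) = (\<Sum>m<2. (diff m E / fact m) * ((E - x) - E)^m) + (diff 2 t / fact 2) * ((E - x) - E)^2"
    apply (rule Taylor_down[where b = E])
    using False x s_deriv s1_deriv by (auto simp: diff_def less_2_cases_iff)
  then obtain t where "E - x < t" "t < E"
    "s (E - x) = (\<Sum>m<2. (diff m E / fact m) * ((E - x) - E)^m) + (diff 2 t / fact 2) * ((E - x) - E)^2"
    by blast
  thus ?thesis
    by (intro bexI[of _ t]) (auto simp: diff_def numeral_2_eq_2 power2_eq_square)
qed

theorem mainTheorem3:
  fixes d :: nat and ES :: "nat \<Rightarrow> real" and E :: real
    and s s1 s2 :: "real \<Rightarrow> real"
  assumes d_pos: "d \<ge> 1"
    and ES_nonneg: "\<And>k. k < d \<Longrightarrow> ES k \<ge> 0"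
    and s_deriv: "\<And>x. (s has_real_derivative s1 x) (at x)"
    and s1_deriv: "\<And>x. (s1 has_real_derivative s2 x) (at x)"
  shows
   "((\<forall>k<d. bdd_above ((\<lambda>\<xi>. s2 \<xi> * (ES k)\<^sup>2 / 2) ` {E - ES k..E}) \<and>
             bdd_below ((\<lambda>\<xi>. s2 \<xi> * (ES k)\<^sup>2 / 2) ` {E - ES k..E})) \<longrightarrow>
       (\<forall>k<d. \<bar>pvec s E ES d k - qvec (s1 E) ES d k\<bar>
               \<le> qvec (s1 E) ES d k * (exp (gamma_max s2 E ES d - gamma_min s2 E ES d) - 1)) \<and>
       (\<Sum>k<d. \<bar>pvec s E ES d k - qvec (s1 E) ES d k\<bar>) / 2
         \<le> (exp (gamma_max s2 E ES d - gamma_min s2 E ES d) - 1) / 2)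
    \<and>
    (\<forall>(\<eta>::real) (m::nat) (h::real). \<eta> > 0 \<and> m \<ge> 1 \<and>
       (\<forall>\<xi>\<in>{E - Max (ES ` {..<d})..E}. - 4 / (\<eta>\<^sup>2 * real m) \<le> s2 \<xi> \<and> s2 \<xi> \<le> 0) \<and>
       Max (ES ` {..<d}) \<le> h \<longrightarrow>
       (\<Sum>k<d. \<bar>pvec s E ES d k - qvec (s1 E) ES d k\<bar>) / 2
         \<le> (exp (2 * h\<^sup>2 / (\<eta>\<^sup>2 * real m)) - 1) / 2)"
  proof -
  have "\<forall>k. \<exists>\<xi>. k < d \<longrightarrow> \<xi> \<in> {E - ES k..E} \<and> s (E - ES k) = s E - s1 E * ES k + s2 \<xi> * (ES k)\<^sup>2 / 2"
    using taylor2[OF s_deriv s1_deriv] ES_nonneg by metis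
  then obtain \<xi> where xi: "\<And>k. k < d \<Longrightarrow> \<xi> k \<in> {E - ES k..E}"
    and tayk: "\<And>k. k < d \<Longrightarrow> s (E - ES k) = s E - s1 E * ES k + s2 (\<xi> k) * (ES k)\<^sup>2 / 2"
    by metis
  define g where "g k = s2 (\<xi> k) * (ES k)\<^sup>2 / 2" for k
  define F where "F k = (\<lambda>x. s2 x * (ES k)\<^sup>2 / 2)" for k
  have fin: "finite {..<d}" by simp
  have ne: "{..<d} \<noteq> {}" using d_pos by (auto simp: lessThan_empty_iff)
  have A: "(\<forall>k<d. bdd_above ((\<lambda>\<xi>. s2 \<xi> * (ES k)\<^sup>2 / 2) ` {E - ES k..E}) \<and>
             bdd_below ((\<lambda>\<xi>. s2 \<xi> * (ES k)\<^sup>2 / 2) ` {E - ES k..E})) \<longrightarrow>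
       (\<forall>k<d. \<bar>pvec s E ES d k - qvec (s1 E) ES d k\<bar>
               \<le> qvec (s1 E) ES d k * (exp (gamma_max s2 E ES d - gamma_min s2 E ES d) - 1)) \<and>
       (\<Sum>k<d. \<bar>pvec s E ES d k - qvec (s1 E) ES d k\<bar>) / 2
         \<le> (exp (gamma_max s2 E ES d - gamma_min s2 E ES d) - 1) / 2"
  proof
    assume bdd: "\<forall>k<d. bdd_above ((\<lambda>\<xi>. s2 \<xi> * (ES k)\<^sup>2 / 2) ` {E - ES k..E}) \<and>
             bdd_below ((\<lambda>\<xi>. s2 \<xi> * (ES k)\<^sup>2 / 2) ` {E - ES k..E})"
    show "(\<forall>k<d. \<bar>pvec s E ES d k - qvec (s1 E) ES d k\<bar>
               \<le> qvec (s1 E) ES d k * (exp (gamma_max s2 E ES d - gamma_min s2 E ES d) - 1)) \<and>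
       (\<Sum>k<d. \<bar>pvec s E ES d k - qvec (s1 E) ES d k\<bar>) / 2
         \<le> (exp (gamma_max s2 E ES d - gamma_min s2 E ES d) - 1) / 2"
    proof (rule part1[OF d_pos, of s E ES s1 g])
      fix k assume k: "k < d"
      show "s (E - ES k) = s E - s1 E * ES k + g k" using tayk[OF k] by (simp add: g_def)
      have "g k \<le> (SUP \<xi>\<in>{E - ES k..E}. s2 \<xi> * (ES k)\<^sup>2 / 2)"
        unfolding g_def using bdd k xi[OF k] by (intro cSUP_upper) auto
      also have "\<dots> \<le> gamma_max s2 E ES d" unfolding gamma_max_def
        using k by (intro Max_ge) auto
      finally show "g k \<le> gamma_max s2 E ES d" .
      have "gamma_min s2 E ES d \<le> (INF \<xi>\<in>{E - ES k..E}. s2 \<xi> * (ES k)\<^sup>2 / 2)"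
        unfolding gamma_min_def using k by (intro Min_le) auto
      also have "\<dots> \<le> g k"
        unfolding g_def using bdd k xi[OF k] by (intro cINF_lower) auto
      finally show "gamma_min s2 E ES d \<le> g k" .
    qed
  qed
  have B: "\<forall>(\<eta>::real) (m::nat) (h::real). \<eta> > 0 \<and> m \<ge> 1 \<and>
       (\<forall>\<xi>\<in>{E - Max (ES ` {..<d})..E}. - 4 / (\<eta>\<^sup>2 * real m) \<le> s2 \<xi> \<and> s2 \<xi> \<le> 0) \<and>
       Max (ES ` {..<d}) \<le> h \<longrightarrow>
       (\<Sum>k<d. \<bar>pvec s E ES d k - qvec (s1 E) ES d k\<bar>) / 2
         \<le> (exp (2 * h\<^sup>2 / (\<eta>\<^sup>2 * real m)) - 1) / 2"
  proof (intro allI impI)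
    fix \<eta> :: real and m :: nat and h :: real
    assume H: "\<eta> > 0 \<and> m \<ge> 1 \<and>
       (\<forall>\<xi>\<in>{E - Max (ES ` {..<d})..E}. - 4 / (\<eta>\<^sup>2 * real m) \<le> s2 \<xi> \<and> s2 \<xi> \<le> 0) \<and>
       Max (ES ` {..<d}) \<le> h"
    define c where "c = 4 / (\<eta>\<^sup>2 * real m)"
    have c0: "c > 0" using H unfolding c_def by auto
    have sb: "- c \<le> s2 x \<and> s2 x \<le> 0" if "x \<in> {E - Max (ES ` {..<d})..E}" for x
      using H that unfolding c_def by (metis minus_divide_left)
    have ESle: "ES k \<le> h" "0 \<le> ES k" "ES k \<le> Max (ES ` {..<d})" if "k < d" for k
      using H that ES_nonneg[OF that] by (auto intro: order_trans[OF Max_ge])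
    have Fb: "- c * h\<^sup>2 / 2 \<le> s2 x * (ES k)\<^sup>2 / 2 \<and> s2 x * (ES k)\<^sup>2 / 2 \<le> 0"
      if k: "k < d" and x: "x \<in> {E - ES k..E}" for k x
    proof -
      have xx: "x \<in> {E - Max (ES ` {..<d})..E}" using x ESle[OF k] by auto
      have e2: "(ES k)\<^sup>2 \<le> h\<^sup>2" using ESle[OF k] by (intro power_mono) auto
      have "- c * h\<^sup>2 \<le> - c * (ES k)\<^sup>2" using e2 c0 by simp
      also have "\<dots> \<le> s2 x * (ES k)\<^sup>2" using sb[OF xx] by (intro mult_right_mono) auto
      finally have 1: "- c * h\<^sup>2 \<le> s2 x * (ES k)\<^sup>2" .
      have "s2 x * (ES k)\<^sup>2 \<le> 0" using sb[OF xx] by (simp add: mult_nonpos_nonneg)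
      with 1 show ?thesis by simp
    qed
    have bdd: "\<forall>k<d. bdd_above ((\<lambda>\<xi>. s2 \<xi> * (ES k)\<^sup>2 / 2) ` {E - ES k..E}) \<and>
             bdd_below ((\<lambda>\<xi>. s2 \<xi> * (ES k)\<^sup>2 / 2) ` {E - ES k..E})"
      using Fb by (meson bdd_aboveI2 bdd_belowI2)
    have ne2: "{E - ES k..E} \<noteq> {}" if "k < d" for k using ESle[OF that] by auto
    have gmax: "gamma_max s2 E ES d \<le> 0" unfolding gamma_max_def
      using fin ne ne2 Fb by (auto simp: Max_le_iff intro!: cSUP_least)
    have gmin: "- c * h\<^sup>2 / 2 \<le> gamma_min s2 E ES d" unfolding gamma_min_def
      using fin ne ne2 Fb by (auto simp: Min_ge_iff intro!: cINF_greatest)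
    have "(\<Sum>k<d. \<bar>pvec s E ES d k - qvec (s1 E) ES d k\<bar>) / 2
         \<le> (exp (gamma_max s2 E ES d - gamma_min s2 E ES d) - 1) / 2" using A bdd by blast
    also have "\<dots> \<le> (exp (c * h\<^sup>2 / 2) - 1) / 2" using gmax gmin by simp
    also have "c * h\<^sup>2 / 2 = 2 * h\<^sup>2 / (\<eta>\<^sup>2 * real m)" unfolding c_def by simp
    finally show "(\<Sum>k<d. \<bar>pvec s E ES d k - qvec (s1 E) ES d k\<bar>) / 2
         \<le> (exp (2 * h\<^sup>2 / (\<eta>\<^sup>2 * real m)) - 1) / 2" .
  qed
  show ?thesis using A B by blast
qed

end
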